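(* Let $n\ge 2$ be an integer and $k$ an integer with $1\le k\le 2^n$. Then $$v_2\big(s(2^n,k+1)\big)>v_2\big(s(2^n,k)\big)-n.$$
   Context: The (unsigned) Stirling numbers of the first kind $s(n,k)$ are defined by $x(x+1)\cdots(x+n-1)=\sum_{k=0}^n s(n,k)x^k$, with $s(n,k)=0$ for $k>n$. $v_2$ denotes the $2$-adic valuation, with the convention $v_2(0)=+\infty$. *)

theory Defs
  imports "HOL-Combinatorics.Stirling" "HOL-Computational_Algebra.Primes" "HOL-Library.Extended_Nat"
begin

definition v2 :: "nat \<Rightarrow> enat" where
  "v2 m = (if m = 0 then \<infinity> else enat (multiplicity (2::nat) m))"

end

theory Submission
  imports Defs "HOL-Computational_Algebra.Polynomial"
begin


definition ex :: "nat \<Rightarrow> int \<Rightarrow> bool" where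
  "ex e x \<longleftrightarrow> (2::int)^e dvd x \<and> \<not> (2::int)^Suc e dvd x"

lemma ex_iff: "ex e x \<longleftrightarrow> (\<exists>u. odd u \<and> x = 2^e * u)"
proof
  assume h: "ex e x"
  then obtain u where u: "x = 2^e * u" unfolding ex_def by (auto elim: dvdE)
  have "odd u"
  proof
    assume "even u"
    then obtain q where "u = 2*q" by auto
    hence "x = 2^Suc e * q" using u by simp
    thus False using h unfolding ex_def by simp
  qed
  thus "\<exists>u. odd u \<and> x = 2^e * u" using u by blast
next
  assume "\<exists>u. odd u \<and> x = 2^e * u"
  then obtain u where u: "odd u" "x = 2^e * u" by blast
  have "\<not> (2::int)^Suc e dvd x"
  proof
    assume "(2::int)^Suc e dvd x"
    then obtain q where "x = 2^Suc e * q" by (auto elim: dvdE)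
    hence "2^e * u = 2^e * (2 * q)" using u by simp
    hence "u = 2*q" by simp
    thus False using u by simp
  qed
  thus "ex e x" using u unfolding ex_def by simp
qed

lemma ex_mult: "ex e x \<Longrightarrow> ex f y \<Longrightarrow> ex (e+f) (x*y)"
proof -
  assume "ex e x" "ex f y"
  then obtain u1 u2 where "odd u1" "x = 2^e*u1" "odd u2" "y = 2^f*u2" unfolding ex_iff by blast
  hence "odd (u1*u2)" "x*y = 2^(e+f)*(u1*u2)" by (auto simp: power_add)
  thus ?thesis unfolding ex_iff by blast
qed

lemma ex_odd: "odd x \<Longrightarrow> ex 0 x"
  unfolding ex_iff by auto

lemma ex_pow: "ex e x \<Longrightarrow> ex (k+e) (2^k * x)"
  using ex_mult[of k "2^k" e x] ex_iff[of k "2^k"] by auto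

lemma ex_pow_inv: "ex e (2^k * x) \<Longrightarrow> k \<le> e \<and> ex (e-k) x"
proof -
  assume h: "ex e (2^k * x)"
  then obtain u where u: "odd u" "2^k * x = 2^e * u" unfolding ex_iff by blast
  have "k \<le> e"
  proof (rule ccontr)
    assume "\<not> k \<le> e"
    hence "(2::int)^k = 2^e * 2^(k-e)" "k - e > 0" by (auto simp: power_add[symmetric])
    hence "2^e * (2^(k-e) * x) = 2^e * u" using u by (simp add: mult.assoc)
    hence "u = 2^(k-e)*x" by simp
    thus False using u \<open>k-e>0\<close> by simp
  qed
  hence "(2::int)^e = 2^k * 2^(e-k)" by (simp add: power_add[symmetric])
  hence "x = 2^(e-k) * u" using u by simp
  thus ?thesis using \<open>k \<le> e\<close> u unfolding ex_iff by blast
qed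

lemma ex_nz: "ex e x \<Longrightarrow> x \<noteq> 0"
  unfolding ex_def by auto

lemma ex_dvd: "ex e x \<Longrightarrow> f \<le> e \<Longrightarrow> (2::int)^f dvd x"
  unfolding ex_def by (meson dvd_trans le_imp_power_dvd)

lemma ex_unique: "ex e x \<Longrightarrow> ex f x \<Longrightarrow> e = f"
proof (rule ccontr)
  assume a: "ex e x" "ex f x" "e \<noteq> f"
  show False
  proof (cases "e < f")
    case True
    hence "(2::int)^Suc e dvd x" using ex_dvd[OF a(2), of "Suc e"] by simp
    thus False using a(1) unfolding ex_def by simp
  next
    case False
    hence "(2::int)^Suc f dvd x" using ex_dvd[OF a(1), of "Suc f"] a(3) by simp
    thus False using a(2) unfolding ex_def by simp
  qed
qed

lemma ex_add: "ex e x \<Longrightarrow> (2::int)^Suc e dvd y \<Longrightarrow> ex e (x + y)"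
  unfolding ex_def by (metis dvd_add_left_iff dvd_add_right_iff dvd_mult_right power_Suc)

lemma ex_neg: "ex e x \<Longrightarrow> ex e (-x)"
  unfolding ex_def by simp

lemma ex_cong: "ex e y \<Longrightarrow> e < t \<Longrightarrow> (2::int)^t dvd (x - y) \<Longrightarrow> ex e x"
proof -
  assume a: "ex e y" "e < t" "(2::int)^t dvd (x - y)"
  have "(2::int)^Suc e dvd (x - y)" using a(2,3) by (meson Suc_leI dvd_trans le_imp_power_dvd)
  from ex_add[OF a(1) this] show ?thesis by simp
qed

lemma ex_sum:
  assumes "finite A" "a \<in> A" "ex e (g a)" "\<And>b. b \<in> A \<Longrightarrow> b \<noteq> a \<Longrightarrow> (2::int)^Suc e dvd g b"
  shows "ex e (sum g A)"
proof -
  have "sum g A = g a + sum g (A - {a})" using assms(1,2) by (simp add: sum.remove)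
  moreover have "(2::int)^Suc e dvd sum g (A - {a})" using assms(4) by (intro dvd_sum) auto
  ultimately show ?thesis using ex_add[OF assms(3)] by simp
qed

lemma ex_nat_mult: "m \<noteq> 0 \<Longrightarrow> ex e (int m) \<Longrightarrow> multiplicity (2::nat) m = e"
proof -
  assume "ex e (int m)"
  hence "(2::int)^e dvd int m" "\<not> (2::int)^Suc e dvd int m" unfolding ex_def by auto
  hence "(2::nat)^e dvd m" "\<not> (2::nat)^Suc e dvd m"
    by (metis of_nat_dvd_iff of_nat_numeral of_nat_power)+
  thus ?thesis by (rule multiplicity_eqI)
qed

lemma ex_odd_factor: "odd u \<Longrightarrow> ex e (u*x) \<Longrightarrow> ex e x"
proof -
  assume u: "odd u" and h: "ex e (u*x)"
  have cop: "coprime ((2::int)^e) u" using u by simp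
  have "(2::int)^e dvd x" using h cop unfolding ex_def by (meson coprime_dvd_mult_right_iff)
  moreover have "\<not> (2::int)^Suc e dvd x" using h unfolding ex_def by (meson dvd_mult)
  ultimately show ?thesis unfolding ex_def by simp
qed

definition vb :: "nat \<Rightarrow> nat" where "vb b = multiplicity (2::nat) b"

lemma vb_spec: "b > 0 \<Longrightarrow> (2::nat)^(vb b) dvd b \<and> \<not> (2::nat)^Suc (vb b) dvd b"
proof -
  assume b: "b > 0"
  have "(2::nat)^(vb b) dvd b" unfolding vb_def by (rule multiplicity_dvd)
  moreover have "\<not> (2::nat)^Suc (vb b) dvd b"
  proof
    assume "(2::nat)^Suc (vb b) dvd b"
    hence "Suc (vb b) \<le> vb b" unfolding vb_def using b by (intro multiplicity_geI) auto
    thus False by simp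
  qed
  ultimately show ?thesis by simp
qed

lemma vb_ex: "b > 0 \<Longrightarrow> ex (vb b) (int b)"
  using vb_spec[of b] unfolding ex_def by (metis of_nat_dvd_iff of_nat_numeral of_nat_power)

lemma vb_le: "b > 0 \<Longrightarrow> 2^(vb b) \<le> b"
  using vb_spec[of b] by (simp add: dvd_imp_le)

lemma vb_less: "b > 0 \<Longrightarrow> vb b < b"
  using vb_le[of b] less_exp[of "vb b"] by linarith

lemma vb_lt_pow: "0 < b \<Longrightarrow> b < 2^m \<Longrightarrow> vb b < m"
  using vb_le[of b] by (metis le_less_trans nat_power_less_imp_less zero_less_numeral)

lemma vb_sub: assumes "0 < c" "c < 2^m" shows "vb (2^m - c) = vb c"
proof -
  let ?e = "vb c"
  have e: "?e < m" using vb_lt_pow assms by blast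
  have d1: "(2::nat)^?e dvd c" "\<not> (2::nat)^Suc ?e dvd c" using vb_spec assms by auto
  have d2: "(2::nat)^Suc ?e dvd 2^m" using e le_imp_power_dvd[of "Suc ?e" m "2::nat"] by simp
  have "(2::nat)^?e dvd 2^m" using e by (simp add: le_imp_power_dvd)
  hence "(2::nat)^?e dvd 2^m - c" using d1 by (simp add: dvd_diff_nat)
  moreover have "\<not> (2::nat)^Suc ?e dvd 2^m - c"
  proof
    assume "(2::nat)^Suc ?e dvd 2^m - c"
    hence "(2::nat)^Suc ?e dvd 2^m - (2^m - c)" using d2 by (simp add: dvd_diff_nat)
    moreover have "2^m - (2^m - c) = c" using assms by simp
    ultimately show False using d1 by simp
  qed
  ultimately show ?thesis unfolding vb_def by (rule multiplicity_eqI)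
qed

lemma odd_binom_pow: "r < 2^m \<Longrightarrow> odd (2^m - 1 choose r)"
proof (induction r)
  case 0 then show ?case by simp
next
  case (Suc r)
  let ?n = "(2::nat)^m - 1"
  have IH: "odd (?n choose r)" using Suc by simp
  have eq: "Suc r * (?n choose Suc r) = (?n - r) * (?n choose r)"
    using binomial_absorption[of r ?n] binomial_absorb_comp[of ?n r] by simp
  have nr: "?n - r = 2^m - Suc r" by simp
  have v: "vb (?n - r) = vb (Suc r)" using vb_sub[of "Suc r" m] Suc.prems nr by simp
  have "ex (vb (Suc r) + 0) (int (?n - r) * int (?n choose r))"
    using ex_mult[OF vb_ex[of "?n - r"] ex_odd[of "int (?n choose r)"]] v IH Suc.prems by simp
  hence h: "ex (vb (Suc r)) (int (Suc r) * int (?n choose Suc r))"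
    using eq by (metis add_0_right of_nat_mult)
  obtain u where u: "odd u" "int (Suc r) = 2^vb (Suc r) * u"
    using vb_ex[of "Suc r"] unfolding ex_iff by auto
  have "ex (vb (Suc r)) (2^vb (Suc r) * (u * int (?n choose Suc r)))" using h u by (simp add: mult.assoc)
  hence "ex 0 (u * int (?n choose Suc r))" using ex_pow_inv by fastforce
  hence "ex 0 (int (?n choose Suc r))" using ex_odd_factor u by blast
  thus ?case unfolding ex_def by simp
qed

definition bet :: "nat \<Rightarrow> nat \<Rightarrow> nat" where
  "bet m b = (if b = 0 \<or> b = 2^m then 0 else m - vb b)"

lemma ex_binom: assumes "b \<le> 2^m" shows "ex (bet m b) (int (2^m choose b))"
proof (cases "b = 0 \<or> b = 2^m")
  case True then show ?thesis unfolding bet_def by (auto intro: ex_odd)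
next
  case False
  hence b: "0 < b" "b < 2^m" using assms by auto
  have "Suc (b-1) * (Suc (2^m-1) choose Suc (b-1)) = Suc (2^m-1) * ((2^m-1) choose (b-1))"
    by (rule Suc_times_binomial)
  hence eq: "b * (2^m choose b) = 2^m * ((2^m-1) choose (b-1))" using b by simp
  have o: "odd ((2^m-1) choose (b-1))" using odd_binom_pow b by simp
  have "ex (m + 0) (2^m * int ((2^m-1) choose (b-1)))"
    using ex_pow[OF ex_odd, of "int ((2^m-1) choose (b-1))" m] o by simp
  hence h: "ex m (int b * int (2^m choose b))" using eq by (metis add_0_right of_nat_mult of_nat_numeral of_nat_power)
  obtain u where u: "odd u" "int b = 2^vb b * u" using vb_ex[of b] b unfolding ex_iff by auto
  have "ex m (2^vb b * (u * int (2^m choose b)))" using h u by (simp add: mult.assoc)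
  hence "vb b \<le> m \<and> ex (m - vb b) (u * int (2^m choose b))" by (rule ex_pow_inv)
  hence "ex (m - vb b) (int (2^m choose b))" using ex_odd_factor u by blast
  thus ?thesis using False unfolding bet_def by simp
qed

lemma bet_le: "bet m b \<le> m" unfolding bet_def by auto

definition pc :: "int \<Rightarrow> int poly \<Rightarrow> int poly \<Rightarrow> bool" where
  "pc m p q \<longleftrightarrow> (\<exists>h. p = q + smult m h)"

lemma pc_refl: "pc m p p" unfolding pc_def by (rule exI[of _ 0]) simp

lemma pc_trans: "pc m p q \<Longrightarrow> pc m q r \<Longrightarrow> pc m p r"
  unfolding pc_def by (metis add.assoc smult_add_right)

lemma pc_mult: "pc m p q \<Longrightarrow> pc m r s \<Longrightarrow> pc m (p*r) (q*s)"
proof -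
  assume "pc m p q" "pc m r s"
  then obtain h1 h2 where h: "p = q + smult m h1" "r = s + smult m h2" unfolding pc_def by blast
  have "p * r = q * s + smult m (h1 * s + q * h2 + smult m (h1 * h2))"
    unfolding h by (simp add: algebra_simps smult_add_right)
  thus ?thesis unfolding pc_def by blast
qed

lemma pc_prod: "finite A \<Longrightarrow> (\<And>x. x \<in> A \<Longrightarrow> pc m (f x) (g x)) \<Longrightarrow> pc m (prod f A) (prod g A)"
  by (induction A rule: finite_induct) (auto intro: pc_mult pc_refl)

lemma pc_sq: assumes "pc (2^t) p q" "1 \<le> t" shows "pc (2^Suc t) (p*p) (q*q)"
proof -
  obtain h where h: "p = q + smult (2^t) h" using assms unfolding pc_def by blast
  have ex1: "t + t = Suc t + (t - 1)" using assms(2) by simp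
  have e: "(2::int)^t * 2^t = 2^Suc t * 2^(t-1)" by (simp only: power_add[symmetric] ex1)
  have "p * p = q * q + (smult (2^t) (h * q) + smult (2^t) (h * q)) + smult (2^t * 2^t) (h * h)"
    unfolding h by (simp add: algebra_simps)
  also have "smult (2^t) (h * q) + smult (2^t) (h * q) = smult (2^Suc t) (h * q)"
    by (simp flip: smult_add_left)
  also have "smult ((2::int)^t * 2^t) (h * h) = smult (2^Suc t) (smult (2^(t-1)) (h * h))"
    by (simp only: e smult_smult)
  finally have "p * p = q * q + smult (2^Suc t) (h * q + smult (2^(t-1)) (h*h))"
    by (simp add: smult_add_right)
  thus ?thesis unfolding pc_def by blast
qed

lemma pc_coeff: "pc m p q \<Longrightarrow> m dvd coeff p k - coeff q k"
  unfolding pc_def by auto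

lemma pc_lin: "m dvd a - b \<Longrightarrow> pc m [:a, c:] [:b, c:]"
proof -
  assume "m dvd a - b"
  then obtain k where "a - b = m * k" by (auto elim: dvdE)
  hence "[:a, c:] = [:b, c:] + smult m [:k:]" by simp
  thus ?thesis unfolding pc_def by blast
qed

lemma prod_split_add: fixes a b :: nat and f :: "nat \<Rightarrow> 'a::comm_monoid_mult" shows "(\<Prod>l<a+b. f l) = (\<Prod>l<a. f l) * (\<Prod>l<b. f (a + l))"
  by (induction b) (simp_all add: mult.assoc)

definition T :: "nat \<Rightarrow> int poly" where
  "T t = (\<Prod>l<2^(t-1). [: -((2*int l+1)^2), 1:])"

lemma T_step_dvd:
  assumes "1 \<le> t"
  shows "(2::int)^Suc t dvd -((2*int (2^(t-1)+l)+1)^2) - -((2*int l+1)^2)"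
proof -
  have tt: "Suc t = (t - 1) + 2" using assms by simp
  have "(2::int)^Suc t = 2^(t-1) * 4" by (simp only: tt power_add) simp
  moreover have "-((2*int (2^(t-1)+l)+1)^2) - -((2*int l+1)^2) = (2^(t-1) * 4) * (-(2*int l+1) - 2^(t-1))"
    by (simp add: algebra_simps power2_eq_square)
  ultimately show ?thesis by simp
qed

lemma T_cong: "1 \<le> t \<Longrightarrow> pc (2^t) (T t) ([:-1,1:]^(2^(t-1)))"
proof (induction t rule: nat_induct_at_least)
  case base
  then show ?case by (simp add: T_def pc_refl)
next
  case (Suc t)
  let ?K = "(2::nat)^(t-1)"
  let ?f = "\<lambda>l::nat. [: -((2*int l+1)^2), 1::int:]"
  have "Suc t - 1 = Suc (t - 1)" using Suc.hyps by simp
  hence "(2::nat)^(Suc t - 1) = 2 * ?K" by (simp only: power_Suc)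
  hence K2: "(2::nat)^(Suc t - 1) = ?K + ?K" by simp
  have eqT: "T (Suc t) = (\<Prod>l<?K. ?f l) * (\<Prod>l<?K. ?f (?K + l))"
    unfolding T_def K2 by (rule prod_split_add)
  have c1: "pc (2^Suc t) ((\<Prod>l<?K. ?f l) * (\<Prod>l<?K. ?f (?K + l))) ((\<Prod>l<?K. ?f l) * (\<Prod>l<?K. ?f l))"
    by (intro pc_mult pc_refl pc_prod pc_lin T_step_dvd Suc.hyps) simp
  have c2: "pc (2^Suc t) ((\<Prod>l<?K. ?f l) * (\<Prod>l<?K. ?f l)) ([:-1,1:]^?K * [:-1,1:]^?K)"
    using pc_sq[OF Suc.IH[unfolded T_def] Suc.hyps] by simp
  have "pc (2^Suc t) (T (Suc t)) ([:-1,1:]^?K * [:-1,1:]^?K)" using pc_trans[OF c1 c2] eqT by simp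
  thus ?case using K2 by (simp add: power_add)
qed


definition R :: "nat \<Rightarrow> int poly" where
  "R t = (\<Prod>l<2^(t-1). [: 4^t - (2^t - 2*int l - 1)^2, 1 :])"

definition Ut :: "nat \<Rightarrow> int poly" where
  "Ut t = (\<Prod>l<2^(t-1). [: 4^t - (2^t - 2*int l - 1)^2, 4^t :])"

lemma Ut_R: "Ut t = pcompose (R t) [:0, 4^t:]"
  unfolding Ut_def R_def pcompose_prod by (simp add: pcompose_pCons)

lemma R_T: "1 \<le> t \<Longrightarrow> pc (2^t) (R t) (T t)"
  unfolding R_def T_def
proof (intro pc_prod pc_lin)
  fix l :: nat
  have f: "(4::int)^t = 2^t * 2^t" by (simp flip: power_mult_distrib)
  have "(4::int)^t - (2^t - 2*int l - 1)^2 - -((2*int l+1)^2) = 2^t * (2*(2*int l+1))"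
    unfolding f by (simp add: algebra_simps power2_eq_square)
  thus "(2::int)^t dvd (4::int)^t - (2^t - 2*int l - 1)^2 - -((2*int l+1)^2)" by simp
qed simp

lemma R_degree: "degree (R t) \<le> 2^(t-1)"
proof -
  have "degree (R t) \<le> (\<Sum>l<2^(t-1). degree [: 4^t - (2^t - 2*int l - 1)^2, 1::int :])"
    unfolding R_def using degree_prod_sum_le[of "{..<2^(t-1)}" "\<lambda>l. [: 4^t - (2^t - 2*int l - 1)^2, 1::int :]"]
    by (simp add: o_def)
  also have "\<dots> = 2^(t-1)" by simp
  finally show ?thesis .
qed

lemma ex_R: assumes "1 \<le> t" "b \<le> 2^(t-1)" shows "ex (bet (t-1) b) (coeff (R t) b)"
proof -
  let ?K = "(2::nat)^(t-1)"
  have cB: "coeff ([:-1,1::int:]^?K) b = int (?K choose b) * (-1)^(?K-b)"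
    using coeff_linear_poly_power[OF assms(2), of "-1::int" 1] by simp
  have "ex (bet (t-1) b + 0) (int (?K choose b) * (-1)^(?K-b))"
    by (rule ex_mult[OF ex_binom[OF assms(2)] ex_odd]) simp
  hence e1: "ex (bet (t-1) b) (coeff ([:-1,1::int:]^?K) b)" using cB by simp
  have "pc (2^t) (R t) ([:-1,1:]^?K)" using pc_trans[OF R_T[OF assms(1)] T_cong[OF assms(1)]] .
  hence "(2::int)^t dvd coeff (R t) b - coeff ([:-1,1::int:]^?K) b" by (rule pc_coeff)
  moreover have "bet (t-1) b < t" using bet_le[of "t-1" b] assms(1) by linarith
  ultimately show ?thesis using ex_cong[OF e1] by blast
qed

definition W :: "nat \<Rightarrow> nat \<Rightarrow> nat" where "W t b = 2*t*b + bet (t-1) b"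

lemma ex_Ut: assumes "1 \<le> t" "b \<le> 2^(t-1)" shows "ex (W t b) (coeff (Ut t) b)"
proof -
  have "coeff (Ut t) b = 2^(2*t*b) * coeff (R t) b"
    unfolding Ut_R coeff_pcompose_linear by (simp add: power_mult power_mult_distrib[symmetric])
  thus ?thesis using ex_pow[OF ex_R[OF assms], of "2*t*b"] unfolding W_def by simp
qed

lemma Ut_zero: "2^(t-1) < b \<Longrightarrow> coeff (Ut t) b = 0"
  unfolding Ut_R coeff_pcompose_linear using R_degree[of t] by (simp add: coeff_eq_0)


lemma W_0[simp]: "W t 0 = 0" unfolding W_def bet_def by simp
lemma W_top: "W t (2^(t-1)) = 2*t*2^(t-1)" unfolding W_def bet_def by simp
lemma W_ge: "2*t*b \<le> W t b" unfolding W_def by simp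
lemma W_le: "W t b \<le> 2*t*b + (t-1)" unfolding W_def using bet_le[of "t-1" b] by simp
lemma W_mono: "1 \<le> t \<Longrightarrow> W t b \<le> W t (Suc b)"
  using W_le[of t b] W_ge[of t "Suc b"] by simp

definition D :: "nat \<Rightarrow> nat" where "D n = 2^(n-1) - 1"

lemma D_Suc: "1 \<le> n \<Longrightarrow> D (Suc n) = D n + 2^(n-1)"
proof -
  assume "1 \<le> n"
  hence "(2::nat)^n = 2^(n-1) + 2^(n-1)" by (metis Suc_diff_le diff_Suc_1 mult_2 power_Suc)
  moreover have "(1::nat) \<le> 2^(n-1)" by simp
  ultimately show ?thesis unfolding D_def by simp
qed

fun V :: "nat \<Rightarrow> nat \<Rightarrow> nat" where
  "V 0 j = 0"
| "V (Suc n) j = (if n = 0 then 0 else if j \<le> D n then V n j else V n (D n) + W n (j - D n))"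

lemma V_Suc: "1 \<le> n \<Longrightarrow> V (Suc n) j = (if j \<le> D n then V n j else V n (D n) + W n (j - D n))"
  by simp

lemma V_e: "1 \<le> n \<Longrightarrow> c \<le> D n \<Longrightarrow> V n (D n) \<le> V n (D n - c) + 2*(n-1)*c"
proof (induction n arbitrary: c rule: nat_induct_at_least)
  case base then show ?case by (simp add: D_def)
next
  case (Suc n)
  let ?K = "(2::nat)^(n-1)"
  have DS: "D (Suc n) = D n + ?K" using D_Suc Suc.hyps by simp
  have top: "V (Suc n) (D (Suc n)) = V n (D n) + 2*n*?K"
    using V_Suc[OF Suc.hyps] DS W_top[of n] by simp
  show ?case
  proof (cases "c \<le> ?K")
    case True
    show ?thesis
    proof (cases "c = ?K")
      case True
      hence "V (Suc n) (D (Suc n) - c) = V n (D n)" using V_Suc[OF Suc.hyps] DS by simp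
      thus ?thesis using top True by simp
    next
      case False
      hence nl: "\<not> (D (Suc n) - c \<le> D n)" "D (Suc n) - c - D n = ?K - c" using DS \<open>c \<le> ?K\<close> by auto
      hence "V (Suc n) (D (Suc n) - c) = V n (D n) + W n (?K - c)" using V_Suc[OF Suc.hyps, of "D (Suc n) - c"]
        by simp
      moreover have "2*n*(?K - c) \<le> W n (?K - c)" by (rule W_ge)
      moreover have "2*n*?K = 2*n*(?K - c) + 2*n*c" using \<open>c \<le> ?K\<close> by (simp add: algebra_simps)
      ultimately show ?thesis using top by simp
    qed
  next
    case False
    hence c': "c - ?K \<le> D n" using Suc.prems DS by simp
    have "D (Suc n) - c = D n - (c - ?K)" using False DS by simp
    hence "V (Suc n) (D (Suc n) - c) = V n (D n - (c - ?K))" using V_Suc[OF Suc.hyps] by simp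
    moreover have "V n (D n) \<le> V n (D n - (c - ?K)) + 2*(n-1)*(c - ?K)" using Suc.IH[OF c'] .
    moreover have "2*(n-1)*(c - ?K) + 2*n*?K \<le> 2*n*c"
    proof -
      have "c = (c - ?K) + ?K" using False by simp
      hence "2*n*c = 2*n*(c-?K) + 2*n*?K" by (metis add_mult_distrib2)
      moreover have "2*(n-1)*(c - ?K) \<le> 2*n*(c-?K)" by simp
      ultimately show ?thesis by linarith
    qed
    ultimately show ?thesis using top by simp
  qed
qed


lemma V_mono1: "1 \<le> n \<Longrightarrow> j < D n \<Longrightarrow> V n j \<le> V n (Suc j)"
proof (induction n arbitrary: j rule: nat_induct_at_least)
  case base then show ?case by (simp add: D_def)
next
  case (Suc n)
  let ?K = "(2::nat)^(n-1)"
  have DS: "D (Suc n) = D n + ?K" using D_Suc Suc.hyps by simp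
  consider "Suc j \<le> D n" | "j = D n" | "D n < j" by linarith
  thus ?case
  proof cases
    case 1 thus ?thesis using Suc.IH[of j] V_Suc[OF Suc.hyps] by simp
  next
    case 2 thus ?thesis using V_Suc[OF Suc.hyps] by simp
  next
    case 3
    hence "Suc j - D n = Suc (j - D n)" by simp
    thus ?thesis using 3 V_Suc[OF Suc.hyps] W_mono[of n "j - D n"] Suc.hyps by simp
  qed
qed

lemma V_mono: assumes "1 \<le> n" "j \<le> j'" "j' \<le> D n" shows "V n j \<le> V n j'"
proof -
  have "\<forall>k. j + k \<le> D n \<longrightarrow> V n j \<le> V n (j+k)"
  proof
    fix k show "j + k \<le> D n \<longrightarrow> V n j \<le> V n (j+k)"
    proof (induction k)
      case 0 then show ?case by simp
    next
      case (Suc k)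
      show ?case
      proof
        assume h: "j + Suc k \<le> D n"
        hence "j + k < D n" by simp
        hence "V n j \<le> V n (j+k)" "V n (j+k) \<le> V n (Suc (j+k))" using Suc.IH V_mono1[OF assms(1), of "j+k"] by auto
        thus "V n j \<le> V n (j + Suc k)" by simp
      qed
    qed
  qed
  thus ?thesis using assms(2,3) by (metis le_add_diff_inverse)
qed

lemma V_b: "1 \<le> n \<Longrightarrow> b \<le> j \<Longrightarrow> j \<le> D n \<Longrightarrow> V n j \<le> V n (j - b) + 2*(n-1)*b + (n-1)"
proof (induction n arbitrary: j b rule: nat_induct_at_least)
  case base then show ?case by (simp add: D_def)
next
  case (Suc n)
  let ?K = "(2::nat)^(n-1)"
  have DS: "D (Suc n) = D n + ?K" using D_Suc Suc.hyps by simp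
  consider "j \<le> D n" | "D n < j" "j - b \<le> D n" | "D n < j - b" by linarith
  thus ?case
  proof cases
    case 1
    hence "j - b \<le> D n" by simp
    moreover have "2*(n-1)*b + (n-1) \<le> 2*n*b + n" by (simp add: add_le_mono)
    ultimately show ?thesis using 1 Suc.IH[of b j] V_Suc[OF Suc.hyps] Suc.prems by simp
  next
    case 2
    have vj: "V (Suc n) j = V n (D n) + W n (j - D n)" using 2 V_Suc[OF Suc.hyps] by simp
    have vjb: "V (Suc n) (j - b) = V n (j - b)" using 2 V_Suc[OF Suc.hyps] by simp
    have "V n (D n) \<le> V n (D n - (D n - (j - b))) + 2*(n-1)*(D n - (j-b))"
      using V_e[OF Suc.hyps, of "D n - (j - b)"] by simp
    hence a: "V n (D n) \<le> V n (j - b) + 2*(n-1)*(D n - (j-b))" using 2 by simp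
    have w: "W n (j - D n) \<le> 2*n*(j - D n) + (n-1)" by (rule W_le)
    have "2*(n-1)*(D n - (j-b)) + 2*n*(j - D n) \<le> 2*n*b"
    proof -
      have "b = (D n - (j-b)) + (j - D n)" using 2 Suc.prems by simp
      hence "2*n*b = 2*n*(D n - (j-b)) + 2*n*(j - D n)" by (metis add_mult_distrib2)
      moreover have "2*(n-1)*(D n - (j-b)) \<le> 2*n*(D n - (j-b))" by simp
      ultimately show ?thesis by linarith
    qed
    moreover have "n - 1 \<le> n" by simp
    ultimately have "V (Suc n) j \<le> V (Suc n) (j - b) + 2*n*b + n" using vj vjb a w by linarith
    thus ?thesis by (simp only: diff_Suc_1)
  next
    case 3
    have j3: "D n < j" using 3 by simp
    have vj: "V (Suc n) j = V n (D n) + W n (j - D n)" using j3 V_Suc[OF Suc.hyps] by simp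
    have vjb: "V (Suc n) (j - b) = V n (D n) + W n (j - b - D n)" using 3 V_Suc[OF Suc.hyps] by simp
    have w1: "W n (j - D n) \<le> 2*n*(j - D n) + (n-1)" by (rule W_le)
    have w2: "2*n*(j - b - D n) \<le> W n (j - b - D n)" by (rule W_ge)
    have "j - D n = (j - b - D n) + b" using 3 by simp
    hence w3: "2*n*(j - D n) = 2*n*(j - b - D n) + 2*n*b" by (metis add_mult_distrib2)
    have "n - 1 \<le> n" by simp
    hence "V (Suc n) j \<le> V (Suc n) (j - b) + 2*n*b + n" using vj vjb w1 w2 w3 by linarith
    thus ?thesis by (simp only: diff_Suc_1)
  qed
qed

definition S :: "nat \<Rightarrow> int poly" where "S n = (\<Prod>t\<in>{1..<n}. Ut t)"

lemma S_Suc: "1 \<le> n \<Longrightarrow> S (Suc n) = S n * Ut n"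
  unfolding S_def by (simp add: prod.atLeastLessThan_Suc)

lemma Ut_degree: "degree (Ut t) \<le> 2^(t-1)"
  unfolding Ut_R using R_degree[of t] by (simp add: degree_pcompose)

lemma S_degree: "1 \<le> n \<Longrightarrow> degree (S n) \<le> D n"
proof (induction n rule: nat_induct_at_least)
  case base then show ?case by (simp add: S_def D_def)
next
  case (Suc n)
  have "degree (S (Suc n)) \<le> degree (S n) + degree (Ut n)" unfolding S_Suc[OF Suc.hyps] by (rule degree_mult_le)
  thus ?case using Suc.IH Ut_degree[of n] D_Suc[OF Suc.hyps] by simp
qed


lemma bet_mid: "0 < b \<Longrightarrow> b < 2^m \<Longrightarrow> bet m b = m - vb b"
  unfolding bet_def by simp

lemma I1: assumes "1 \<le> n" "1 \<le> b" "b \<le> j" "j \<le> D n"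
  shows "V n j < V n (j-b) + W n b"
proof -
  have vb1: "V n j \<le> V n (j - b) + 2*(n-1)*b + (n-1)" using V_b assms by blast
  have "(0::nat) < 2^(n-1)" by simp
  hence bK: "b < 2^(n-1)" using assms(3,4) unfolding D_def by linarith
  have W: "W n b = 2*n*b + ((n-1) - vb b)" unfolding W_def using bet_mid[of b "n-1"] bK assms(2) by simp
  have "vb b < n - 1" using vb_lt_pow[of b "n-1"] bK assms(2) by simp
  moreover have "vb b < b" using vb_less assms(2) by simp
  moreover have "2*n*b = 2*(n-1)*b + 2*b"
  proof -
    obtain k where "n = Suc k" using assms(1) by (cases n) auto
    thus ?thesis by (simp add: algebra_simps)
  qed
  ultimately show ?thesis using vb1 W by linarith
qed

lemma I2: assumes "1 \<le> n" "l < D n" "D n < j" "j - l \<le> 2^(n-1)"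
  shows "V n (D n) + W n (j - D n) < V n l + W n (j - l)"
proof (cases n)
  case 0 thus ?thesis using assms by simp
next
  case (Suc m)
  show ?thesis
  proof (cases "m = 0")
    case True thus ?thesis using assms Suc by (simp add: D_def)
  next
    case False
    hence m1: "1 \<le> m" by simp
    define c where "c = D n - l"
    define b0 where "b0 = j - D n"
    have c1: "1 \<le> c" "l = D n - c" using assms(2) c_def by auto
    have b01: "1 \<le> b0" using assms(3) b0_def by simp
    have jl: "j - l = b0 + c" using assms(2,3) b0_def c_def by simp
    have Km: "(2::nat)^(n-1) = 2^m" using Suc by simp
    have bc: "b0 + c \<le> 2^m" using assms(4) jl Km by simp
    have Wn: "\<And>x. W n x = 2*n*x + bet m x" unfolding W_def Suc by simp
    have WW: "W n (j - D n) = W n b0" "W n (j - l) = W n (b0 + c)" using jl b0_def by auto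
    show ?thesis
    proof (cases "m < 2*c")
      case True
      have "V n (D n) \<le> V n (D n - c) + 2*(n-1)*c" using V_e[OF assms(1)] c_def by simp
      hence a: "V n (D n) \<le> V n l + 2*m*c" using c1 Suc by simp
      have "W n b0 \<le> 2*n*b0 + m" using W_le[of n b0] Suc by simp
      moreover have "2*n*(b0+c) \<le> W n (b0+c)" by (rule W_ge)
      moreover have "2*n*(b0+c) = 2*n*b0 + 2*m*c + 2*c" using Suc by (simp add: algebra_simps)
      ultimately show ?thesis unfolding WW using a True by linarith
    next
      case False
      hence cm: "2*c \<le> m" by simp
      have "m < 2^m" by (rule less_exp)
      moreover have "m = Suc (m-1)" using m1 by simp
      hence "(2::nat)^m = 2 * 2^(m-1)" by (metis power_Suc)
      ultimately have cK': "c < 2^(m-1)" using cm by linarith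
      have DS: "D n = D m + 2^(m-1)" using D_Suc[OF m1] Suc by simp
      have lD: "l = D m + (2^(m-1) - c)" "D m < l" using c1 DS cK' by auto
      have nl: "\<not> l \<le> D m" "l - D m = 2^(m-1) - c" using lD by auto
      have Vl: "V n l = V m (D m) + W m (2^(m-1) - c)" using V_Suc[OF m1, of l] nl Suc by (simp del: V.simps)
      have nt: "\<not> D n \<le> D m" "D n - D m = 2^(m-1)" using DS by auto
      have Vt: "V n (D n) = V m (D m) + 2*m*2^(m-1)" using V_Suc[OF m1, of "D n"] nt W_top[of m] Suc by (simp del: V.simps)
      have Wm: "W m (2^(m-1) - c) = 2*m*(2^(m-1) - c) + ((m-1) - vb c)"
        using bet_mid[of "2^(m-1) - c" "m-1"] vb_sub[of c "m-1"] c1 cK' unfolding W_def by simp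
      have vbc: "vb c < c" using vb_less c1 by simp
      have vbc2: "vb c < m - 1" using vb_lt_pow[of c "m-1"] c1 cK' by simp
      have "2^(m-1) < (2::nat)^m" using m1 by (simp add: power_strict_increasing)
      hence b0K: "b0 < 2^m" using bc c1 by linarith
      have Wb0: "W n b0 = 2*n*b0 + (m - vb b0)" using Wn bet_mid[of b0 m] b01 b0K by simp
      have "(2::nat)^(m-1) = (2^(m-1) - c) + c" using cK' by simp
      hence e1: "2*m*2^(m-1) = 2*m*(2^(m-1) - c) + 2*m*c" by (metis add_mult_distrib2)
      show ?thesis
      proof (cases "b0 + c = 2^m")
        case True
        have "b0 = 2^m - c" using True by simp
        moreover have "c < 2^m" using cK' \<open>2^(m-1) < (2::nat)^m\<close> by linarith
        ultimately have "vb b0 = vb c" using vb_sub[of c m] c1 by simp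
        moreover have "W n (b0 + c) = 2*n*(b0+c)" using Wn True unfolding bet_def by simp
        moreover have "2*n*(b0+c) = 2*n*b0 + 2*m*c + 2*c" using Suc by (simp add: algebra_simps)
        ultimately have w1: "W n b0 = 2*n*b0 + ((m - 1 - vb c) + 1)" "W n (b0 + c) = 2*n*b0 + 2*m*c + 2*c"
          using Wb0 vbc2 by auto
        show ?thesis unfolding WW Vl Vt Wm w1 e1 using c1 by simp
      next
        case False
        hence bc2: "b0 + c < 2^m" using bc by simp
        have Wbc: "W n (b0 + c) = 2*n*(b0+c) + (m - vb (b0+c))" using Wn bet_mid[of "b0+c" m] bc2 b01 by simp
        have "vb (b0+c) < m" using vb_lt_pow[of "b0+c" m] bc2 b01 by simp
        moreover have "2*n*(b0+c) = 2*n*b0 + 2*m*c + 2*c" using Suc by (simp add: algebra_simps)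
        ultimately show ?thesis unfolding WW using Vl Vt Wm Wb0 Wbc e1 vbc vbc2 c1 by linarith
      qed
    qed
  qed
qed


lemma S_zero: "1 \<le> n \<Longrightarrow> D n < j \<Longrightarrow> coeff (S n) j = 0"
  using S_degree[of n] by (simp add: coeff_eq_0)

lemma dvd_prod_pow: "(2::int)^a dvd x \<Longrightarrow> (2::int)^b dvd y \<Longrightarrow> c \<le> a + b \<Longrightarrow> (2::int)^c dvd x * y"
proof -
  assume a: "(2::int)^a dvd x" "(2::int)^b dvd y" "c \<le> a + b"
  have "(2::int)^a * 2^b dvd x * y" by (rule mult_dvd_mono[OF a(1) a(2)])
  hence "(2::int)^(a+b) dvd x * y" by (simp add: power_add)
  moreover have "(2::int)^c dvd 2^(a+b)" using a(3) by (rule le_imp_power_dvd)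
  ultimately show ?thesis by (rule dvd_trans[rotated])
qed

lemma ex_S: "1 \<le> n \<Longrightarrow> j \<le> D n \<Longrightarrow> ex (V n j) (coeff (S n) j)"
proof (induction n arbitrary: j rule: nat_induct_at_least)
  case base
  hence "j = 0" by (simp add: D_def)
  thus ?case by (simp add: S_def ex_odd)
next
  case (Suc n)
  let ?K = "(2::nat)^(n-1)"
  have DS: "D (Suc n) = D n + ?K" using D_Suc Suc.hyps by simp
  define l0 where "l0 = min j (D n)"
  have l0j: "l0 \<le> j" "l0 \<le> D n" "j - l0 \<le> ?K" using Suc.prems DS l0_def by auto
  have Veq: "V (Suc n) j = V n l0 + W n (j - l0)"
    using V_Suc[OF Suc.hyps, of j] l0_def by (auto simp del: V.simps)
  have coeq: "coeff (S (Suc n)) j = (\<Sum>i\<le>j. coeff (S n) i * coeff (Ut n) (j - i))"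
    unfolding S_Suc[OF Suc.hyps] coeff_mult ..
  have main: "ex (V n l0 + W n (j - l0)) (coeff (S n) l0 * coeff (Ut n) (j - l0))"
    by (rule ex_mult[OF Suc.IH[OF l0j(2)] ex_Ut[OF Suc.hyps l0j(3)]])
  have others: "(2::int)^Suc (V n l0 + W n (j - l0)) dvd coeff (S n) i * coeff (Ut n) (j - i)"
    if i: "i \<in> {..j}" "i \<noteq> l0" for i
  proof (cases "D n < i \<or> ?K < j - i")
    case True
    thus ?thesis using S_zero[OF Suc.hyps] Ut_zero[of n] by auto
  next
    case False
    hence iD: "i \<le> D n" "j - i \<le> ?K" by auto
    have d1: "(2::int)^(V n i) dvd coeff (S n) i" using ex_dvd[OF Suc.IH[OF iD(1)], of "V n i"] by simp
    have d2: "(2::int)^(W n (j-i)) dvd coeff (Ut n) (j-i)" using ex_dvd[OF ex_Ut[OF Suc.hyps iD(2)], of "W n (j-i)"] by simp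
    have "V n l0 + W n (j - l0) < V n i + W n (j - i)"
    proof (cases "j \<le> D n")
      case True
      hence "l0 = j" using l0_def by simp
      hence "i < j" using i by auto
      thus ?thesis using I1[OF Suc.hyps, of "j - i" j] True \<open>l0 = j\<close> by simp
    next
      case False
      hence "l0 = D n" using l0_def by simp
      hence "i < D n" using i iD by auto
      thus ?thesis using I2[OF Suc.hyps \<open>i < D n\<close>, of j] False \<open>l0 = D n\<close> iD by simp
    qed
    hence "Suc (V n l0 + W n (j - l0)) \<le> V n i + W n (j - i)" by simp
    from dvd_prod_pow[OF d1 d2 this] show ?thesis .
  qed
  have "ex (V n l0 + W n (j - l0)) (\<Sum>i\<le>j. coeff (S n) i * coeff (Ut n) (j - i))"
  proof (rule ex_sum[where a=l0])
    show "ex (V n l0 + W n (j - l0)) (coeff (S n) l0 * coeff (Ut n) (j - l0))" by (rule main)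
  qed (use l0j others in auto)
  thus ?case unfolding coeq Veq .
qed


lemma pcompose_x_pow: "pcompose ([:0,1:]^i) q = q^i"
  by (induction i) (simp_all add: pcompose_mult pcompose_pCons pcompose_1)

lemma pcomp_sum: "degree p \<le> N \<Longrightarrow> pcompose p q = (\<Sum>b\<le>N. smult (coeff p b) (q^b))"
proof -
  assume "degree p \<le> N"
  hence "pcompose p q = pcompose (\<Sum>i\<le>N. monom (coeff p i) i) q" using poly_as_sum_of_monoms' by metis
  also have "\<dots> = (\<Sum>b\<le>N. smult (coeff p b) (q^b))"
    unfolding pcompose_sum monom_altdef pcompose_smult pcompose_x_pow ..
  finally show ?thesis .
qed

definition XX :: "int poly" where "XX = [:0,2,1:]"

lemma coeff_XX_pow: "coeff (XX^b) k = (if b \<le> k \<and> k \<le> 2*b then int (b choose (k-b)) * 2^(2*b-k) else 0)"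
proof -
  have e: "XX = [:0,1:] * [:2,1:]" unfolding XX_def by simp
  have "XX^b = ([:0,1:] * [:2,1:])^b" by (simp only: e)
  also have "\<dots> = [:0,1:]^b * [:2,1:]^b" by (rule power_mult_distrib)
  also have "[:0,1:]^b = (monom 1 b :: int poly)" by (simp add: monom_altdef)
  finally have "XX^b = monom 1 b * [:2,1:]^b" .
  hence c: "coeff (XX^b) k = (if k < b then 0 else coeff ([:2,1::int:]^b) (k - b))"
    by (simp add: coeff_monom_mult)
  have d: "degree ([:2,1::int:]^b) = b" by (simp add: degree_power_eq)
  show ?thesis
  proof (cases "b \<le> k \<and> k \<le> 2*b")
    case True
    hence "k - b \<le> b" by arith
    hence "coeff ([:2,1::int:]^b) (k - b) = int (b choose (k-b)) * 2^(b - (k-b))"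
      using coeff_linear_poly_power[of "k-b" b 2 "1::int"] by simp
    moreover have "b - (k - b) = 2*b - k" using True by simp
    ultimately show ?thesis using c True by simp
  next
    case False
    thus ?thesis using c d by (auto simp: coeff_eq_0)
  qed
qed

lemma XX_low: "k < b \<Longrightarrow> coeff (XX^b) k = 0" by (simp add: coeff_XX_pow)
lemma XX_high: "2*b < k \<Longrightarrow> coeff (XX^b) k = 0" by (simp add: coeff_XX_pow)
lemma XX_top: "coeff (XX^b) (2*b) = 1" by (simp add: coeff_XX_pow)
lemma XX_top1: "1 \<le> b \<Longrightarrow> coeff (XX^b) (2*b - 1) = 2*b"
proof -
  assume b: "1 \<le> b"
  have "2*b - 1 - b = b - 1" "2*b - (2*b - 1) = 1" using b by auto
  moreover have "b choose (b - 1) = b" using b by (simp add: binomial_symmetric[symmetric])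
  ultimately show ?thesis using b by (simp add: coeff_XX_pow)
qed
lemma XX_even: "k < 2*b \<Longrightarrow> 2 dvd coeff (XX^b) k"
proof -
  assume k: "k < 2*b"
  show ?thesis
  proof (cases "b \<le> k")
    case True
    hence "2*b - k = Suc (2*b - k - 1)" using k by simp
    thus ?thesis using True k by (simp add: coeff_XX_pow)
  next
    case False thus ?thesis by (simp add: coeff_XX_pow)
  qed
qed

definition Fp :: "nat \<Rightarrow> int poly" where "Fp n = [:1,1:] * pcompose (S n) XX"

lemma coeff_11_mult: fixes p :: "int poly" shows "coeff ([:1,1:] * p) i = coeff p i + (if i = 0 then 0 else coeff p (i - 1))"
proof -
  have "[:1,1:] * p = p + pCons 0 p" by (simp add: algebra_simps)
  thus ?thesis by (cases i) (simp_all add: coeff_pCons)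
qed

lemma ex_F: assumes n: "1 \<le> n" and i: "i \<le> 2*D n + 1" shows "ex (V n (i div 2)) (coeff (Fp n) i)"
proof -
  define m where "m = i div 2"
  have mD: "m \<le> D n" using i m_def by simp
  define y where "y = (\<lambda>b. coeff (XX^b) i + (if i = 0 then 0 else coeff (XX^b) (i - 1)))"
  have pc: "pcompose (S n) XX = (\<Sum>b\<le>D n. smult (coeff (S n) b) (XX^b))"
    by (rule pcomp_sum[OF S_degree[OF n]])
  have cF: "coeff (Fp n) i = (\<Sum>b\<le>D n. coeff (S n) b * y b)"
    unfolding Fp_def coeff_11_mult pc y_def by (simp add: coeff_sum sum.distrib algebra_simps)
  have ym: "odd (y m)"
  proof (cases "even i")
    case True
    hence i2: "i = 2*m" using m_def by simp
    show ?thesis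
    proof (cases "m = 0")
      case True thus ?thesis using i2 by (simp add: y_def XX_top)
    next
      case False
      hence "coeff (XX^m) (i-1) = 2*m" using XX_top1[of m] i2 by simp
      thus ?thesis using i2 False by (simp add: y_def XX_top)
    qed
  next
    case False
    hence i2: "i = 2*m + 1" using m_def by presburger
    thus ?thesis by (simp add: y_def XX_top XX_high)
  qed
  have main: "ex (V n m) (coeff (S n) m * y m)"
    using ex_mult[OF ex_S[OF n mD] ex_odd[OF ym]] by simp
  have others: "(2::int)^Suc (V n m) dvd coeff (S n) b * y b" if b: "b \<in> {..D n}" "b \<noteq> m" for b
  proof (cases "b < m")
    case True
    have "2*b < i" "i = 0 \<or> 2*b < i - 1" using True m_def by auto
    hence "y b = 0" unfolding y_def using XX_high by auto
    thus ?thesis by simp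
  next
    case False
    hence bm: "m < b" using b by simp
    have "i < 2*b" "i - 1 < 2*b" using bm m_def by auto
    hence d2: "2 dvd y b" unfolding y_def using XX_even by auto
    have "(2::int)^(V n m) dvd coeff (S n) b"
      using ex_dvd[OF ex_S[OF n], of b "V n m"] V_mono[OF n, of m b] bm b by simp
    from this d2 have "(2::int)^(V n m) * 2 dvd coeff (S n) b * y b" by (rule mult_dvd_mono)
    thus ?thesis by (simp add: mult.commute)
  qed
  have "ex (V n m) (\<Sum>b\<le>D n. coeff (S n) b * y b)"
  proof (rule ex_sum[where a=m])
    show "ex (V n m) (coeff (S n) m * y m)" by (rule main)
    show "finite {..D n}" by simp
    show "m \<in> {..D n}" using mD by simp
    show "\<And>b. b \<in> {..D n} \<Longrightarrow> b \<noteq> m \<Longrightarrow> 2 ^ Suc (V n m) dvd coeff (S n) b * y b"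
      using others by blast
  qed
  thus ?thesis using cF m_def by simp
qed


lemma prod_even_odd: fixes f :: "nat \<Rightarrow> 'a::comm_monoid_mult"
  shows "(\<Prod>i<2*k. f i) = (\<Prod>i<k. f (2*i)) * (\<Prod>i<k. f (2*i+1))"
proof (induction k)
  case 0 then show ?case by simp
next
  case (Suc k)
  have "(\<Prod>i<2*Suc k. f i) = (\<Prod>i<2*k. f i) * f (2*k) * f (2*k+1)"
    by (simp add: mult.assoc)
  thus ?case using Suc by (simp add: ac_simps)
qed

lemma prod_pair: fixes g :: "nat \<Rightarrow> 'a::comm_monoid_mult"
  shows "(\<Prod>l<2*k. g l) = (\<Prod>l<k. g l * g (2*k - 1 - l))"
proof (induction k arbitrary: g)
  case 0 then show ?case by simp
next
  case (Suc k)
  have "(\<Prod>l<2*Suc k. g l) = g 0 * (\<Prod>l<Suc (2*k). g (Suc l))"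
    by (simp only: mult_Suc_right add_2_eq_Suc prod.lessThan_Suc_shift)
  also have "\<dots> = g 0 * ((\<Prod>l<2*k. g (Suc l)) * g (2*k+1))" by simp
  also have "(\<Prod>l<2*k. g (Suc l)) = (\<Prod>l<k. g (Suc l) * g (Suc (2*k - 1 - l)))"
    using Suc.IH[of "\<lambda>l. g (Suc l)"] by simp
  also have "\<dots> = (\<Prod>l<k. g (Suc l) * g (2 * Suc k - 1 - Suc l))"
  proof (intro prod.cong refl)
    fix x assume "x \<in> {..<k}"
    hence "x < 2*k" by simp
    thus "g (Suc x) * g (Suc (2 * k - 1 - x)) = g (Suc x) * g (2 * Suc k - 1 - Suc x)"
      using Suc_diff_Suc[OF \<open>x < 2*k\<close>] by simp
  qed
  finally have "(\<Prod>l<2*Suc k. g l) = (g 0 * g (2 * Suc k - 1 - 0)) * (\<Prod>l<k. g (Suc l) * g (2 * Suc k - 1 - Suc l))"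
    by (simp add: ac_simps)
  also have "\<dots> = (\<Prod>l<Suc k. g l * g (2 * Suc k - 1 - l))"
    by (simp only: prod.lessThan_Suc_shift)
  finally show ?case .
qed

lemma prod_smult2: "(\<Prod>i<k. smult (c::int) (f i)) = smult (c^k) (\<Prod>i<k. f i)"
  by (induction k) (simp_all add: mult_smult_left mult_smult_right ac_simps)

definition Pp :: "nat \<Rightarrow> int poly" where "Pp n = (\<Prod>i<2^n. [: int i, 2^(n-1) :])"

lemma pcomp_lin: "pcompose [:c, d:] XX = [: c, 2*d, d :]"
  by (simp add: XX_def pcompose_pCons)

lemma pair_eq: fixes M a b :: int shows "[:a, M:] * [:b, M:] = [: a*b, M*(a+b), M*M :]"
  by (simp add: algebra_simps)

lemma Pp_rec: assumes n: "1 \<le> n" shows "Pp (Suc n) = smult (2^(2^n)) (Pp n * pcompose (Ut n) XX)"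
proof -
  let ?M = "(2::nat)^n"
  let ?K = "(2::nat)^(n-1)"
  have "n = Suc (n - 1)" using n by simp
  hence MK: "?M = 2 * ?K" by (metis power_Suc)
  have MKi: "(2::int)^n = 2 * 2^(n-1)" using \<open>n = Suc (n - 1)\<close> by (metis power_Suc)
  have "Pp (Suc n) = (\<Prod>i<2*?M. [: int i, int ?M :])" unfolding Pp_def by simp
  also have "\<dots> = (\<Prod>i<?M. [: int (2*i), int ?M :]) * (\<Prod>i<?M. [: int (2*i+1), int ?M :])"
    by (rule prod_even_odd)
  also have "(\<Prod>i<?M. [: int (2*i), int ?M :]) = smult (2^?M) (Pp n)"
  proof -
    have "\<And>i. [: int (2*i), int ?M :] = smult 2 [: int i, 2^(n-1) :]" using MK by simp
    hence "(\<Prod>i<?M. [: int (2*i), int ?M :]) = (\<Prod>i<?M. smult 2 [: int i, 2^(n-1) :])" by simp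
    thus ?thesis unfolding prod_smult2 Pp_def by simp
  qed
  also have "(\<Prod>i<?M. [: int (2*i+1), int ?M :]) = pcompose (Ut n) XX"
  proof -
    have "(\<Prod>i<?M. [: int (2*i+1), int ?M :]) = (\<Prod>l<?K. [: int (2*l+1), int ?M :] * [: int (2*(2*?K - 1 - l)+1), int ?M :])"
      unfolding MK by (rule prod_pair)
    also have "\<dots> = (\<Prod>l<?K. pcompose [: 4^n - (2^n - 2*int l - 1)^2, 4^n :] XX)"
    proof (intro prod.cong refl)
      fix l assume l: "l \<in> {..<?K}"
      have i2: "int (2*(2*?K - 1 - l)+1) = 2 * 2^n - 2*int l - 1" using l MK MKi[symmetric] by (simp add: of_nat_diff)
      have m4: "(2::int)^n * 2^n = 4^n" by (simp flip: power_mult_distrib)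
      show "[: int (2*l+1), int ?M :] * [: int (2*(2*?K - 1 - l)+1), int ?M :] = pcompose [: 4^n - (2^n - 2*int l - 1)^2, 4^n :] XX"
      proof -
        have g1: "\<And>Q L::int. (2*L+1)*(2*Q - 2*L - 1) = Q*Q - (Q - 2*L - 1)^2"
          by (simp add: power2_eq_square algebra_simps)
        have g2: "\<And>Q L::int. Q*((2*L+1) + (2*Q - 2*L - 1)) = 2*(Q*Q)" by (simp add: algebra_simps)
        have "[: int (2*l+1), int ?M :] * [: int (2*(2*?K - 1 - l)+1), int ?M :]
            = [: (2*int l+1)*(2*2^n - 2*int l - 1), 2^n*((2*int l+1) + (2*2^n - 2*int l - 1)), 2^n*2^n :]"
          unfolding i2 pair_eq by simp
        also have "\<dots> = [: 4^n - (2^n - 2*int l - 1)^2, 2*4^n, 4^n :]"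
          unfolding g1 g2 m4 ..
        finally show ?thesis unfolding pcomp_lin .
      qed
    qed
    also have "\<dots> = pcompose (Ut n) XX" unfolding Ut_def pcompose_prod ..
    finally show ?thesis .
  qed
  finally show ?thesis by (simp add: mult_smult_left)
qed

lemma Fp_Suc: "1 \<le> n \<Longrightarrow> Fp (Suc n) = Fp n * pcompose (Ut n) XX"
  by (simp only: Fp_def S_Suc pcompose_mult mult.assoc)

lemma Pp_F: "1 \<le> n \<Longrightarrow> \<exists>E. Pp n = smult (2^E) ([:0,1:] * Fp n)"
proof (induction n rule: nat_induct_at_least)
  case base
  have "Pp 1 = [:0,1:] * [:1,1:]" unfolding Pp_def by (simp add: numeral_2_eq_2 lessThan_Suc)
  moreover have "Fp 1 = [:1,1:]" unfolding Fp_def S_def by (simp add: pcompose_1)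
  ultimately show ?case by (intro exI[of _ 0]) simp
next
  case (Suc n)
  then obtain E where E: "Pp n = smult (2^E) ([:0,1:] * Fp n)" by blast
  have "Pp (Suc n) = smult (2^(2^n + E)) ([:0,1:] * Fp (Suc n))"
    unfolding Pp_rec[OF Suc.hyps] Fp_Suc[OF Suc.hyps] E by (simp add: power_add mult_smult_left mult.assoc)
  thus ?case by blast
qed


lemma coeff_stirling: "coeff (\<Prod>i<N. [:int i, 1:]) k = int (stirling N k)"
proof (induction N arbitrary: k)
  case 0 then show ?case by (cases k) simp_all
next
  case (Suc N)
  have e: "(\<Prod>i<Suc N. [:int i, 1:]) = [:int N, 1:] * (\<Prod>i<N. [:int i, 1:])" by (simp add: mult.commute)
  have c: "coeff ([:a, 1:] * p) k = a * coeff p k + (if k = 0 then 0 else coeff p (k - 1))" for a :: int and p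
    by (cases k) (simp_all add: coeff_pCons)
  show ?case
  proof (cases k)
    case 0
    have "int N * int (stirling N 0) = 0" by (cases N) simp_all
    thus ?thesis unfolding e c using 0 Suc.IH by simp
  next
    case (Suc k')
    thus ?thesis unfolding e c using Suc.IH by simp
  qed
qed

lemma coeff_Pp: "coeff (Pp n) k = 2^((n-1)*k) * int (stirling (2^n) k)"
proof -
  have "Pp n = pcompose (\<Prod>i<2^n. [:int i, 1:]) [:0, 2^(n-1):]"
    unfolding Pp_def pcompose_prod by (simp add: pcompose_pCons)
  thus ?thesis by (simp add: coeff_pcompose_linear coeff_stirling power_mult)
qed

lemma coeff_x_mult: fixes p :: "int poly" shows "1 \<le> k \<Longrightarrow> coeff ([:0,1:] * p) k = coeff p (k - 1)"
  by (cases k) (simp_all add: coeff_pCons)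

theorem mainTheorem11:
  fixes n k :: nat
  assumes "n \<ge> 2" and "1 \<le> k" and "k \<le> 2 ^ n"
  shows "v2 (stirling (2 ^ n) (k + 1)) + enat n > v2 (stirling (2 ^ n) k)"
proof (cases "k = 2^n")
  case True
  have "v2 (stirling (2 ^ n) (k + 1)) = \<infinity>" using True by (simp add: v2_def)
  moreover have "v2 (stirling (2 ^ n) k) = enat 0" using True by (simp add: v2_def)
  ultimately show ?thesis by simp
next
  case False
  hence kN: "k < 2^n" using assms(3) by simp
  have n1: "1 \<le> n" using assms(1) by simp
  obtain E where E: "Pp n = smult (2^E) ([:0,1:] * Fp n)" using Pp_F[OF n1] by blast
  have "n = Suc (n - 1)" using n1 by simp
  hence p2: "(2::nat)^n = 2 * 2^(n-1)" by (metis power_Suc)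
  have "(1::nat) \<le> 2^(n-1)" by simp
  hence DN: "2 * D n + 1 = 2^n - 1" unfolding D_def p2 by arith
  have i1: "k - 1 \<le> 2 * D n + 1" "k \<le> 2 * D n + 1" using kN DN by auto
  let ?e1 = "V n ((k-1) div 2)" and ?e2 = "V n (k div 2)"
  have F1: "ex ?e1 (coeff (Fp n) (k-1))" by (rule ex_F[OF n1 i1(1)])
  have F2: "ex ?e2 (coeff (Fp n) k)" by (rule ex_F[OF n1 i1(2)])
  have c1: "2^((n-1)*k) * int (stirling (2^n) k) = 2^E * coeff (Fp n) (k-1)"
    by (simp only: coeff_Pp[symmetric] E coeff_smult coeff_x_mult[OF assms(2)])
  have k1: "1 \<le> k + 1" by simp
  have c2: "2^((n-1)*(k+1)) * int (stirling (2^n) (k+1)) = 2^E * coeff (Fp n) k"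
    using coeff_x_mult[OF k1, of "Fp n"] by (simp only: coeff_Pp[symmetric] E coeff_smult) simp
  have "ex (E + ?e1) (2^((n-1)*k) * int (stirling (2^n) k))" using c1 ex_pow[OF F1, of E] by simp
  hence a1: "(n-1)*k \<le> E + ?e1" "ex (E + ?e1 - (n-1)*k) (int (stirling (2^n) k))" using ex_pow_inv by blast+
  have "ex (E + ?e2) (2^((n-1)*(k+1)) * int (stirling (2^n) (k+1)))" using c2 ex_pow[OF F2, of E] by simp
  hence a2: "(n-1)*(k+1) \<le> E + ?e2" "ex (E + ?e2 - (n-1)*(k+1)) (int (stirling (2^n) (k+1)))" using ex_pow_inv by blast+
  have nz1: "stirling (2^n) k \<noteq> 0" using ex_nz[OF a1(2)] by simp
  have nz2: "stirling (2^n) (k+1) \<noteq> 0" using ex_nz[OF a2(2)] by simp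
  have v1: "v2 (stirling (2^n) k) = enat (E + ?e1 - (n-1)*k)"
    unfolding v2_def using nz1 ex_nat_mult[OF nz1 a1(2)] by simp
  have v2': "v2 (stirling (2^n) (k+1)) = enat (E + ?e2 - (n-1)*(k+1))"
    unfolding v2_def using nz2 ex_nat_mult[OF nz2 a2(2)] by simp
  have mono: "?e1 \<le> ?e2" using V_mono[OF n1, of "(k-1) div 2" "k div 2"] i1 DN by (simp add: div_le_mono)
  have "(n-1)*(k+1) = (n-1)*k + (n-1)" by (simp only: add_mult_distrib2 mult_1_right)
  hence "E + ?e1 - (n-1)*k < E + ?e2 - (n-1)*(k+1) + n" using a1(1) a2(1) mono assms(1) by linarith
  thus ?thesis unfolding v1 v2' by simp
qed

end
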